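(* Let $n \geq 3$, let $V_k$ denote the volume of the unit $k$-sphere in $\mathbb{R}^{k+1}$, and let $$K_n = \frac{\left(P_{n-3}(1)+\left(1-\frac{1}{3^{n-2}}\right)\left(P_{n-2}(1)+\log\left(\frac{3}{4}\right)\right)\right)2^{n-2}V_{n-2}V_{n-3}\Gamma(\frac{n}{2})^2}{(n-2)^2V_{n-1}\Gamma(n)}.$$ Then $$K_n \geq \left(\frac{2\pi e}{n-1}\right)^{\frac{n-1}{2}}\left(\frac{3\left(P_{n-3}(1)+\left(1-\frac{1}{3^{n-2}}\right)\left(P_{n-2}(1)+\log\left(\frac{3}{4}\right)\right)\right)}{2^{\frac{3}{2}}e^{\frac52}(n-2)} \right).$$
   Context: For $k \geq 1$, $P_k(1) = 1+\frac12+\cdots+\frac1k$ (the $k$-th harmonic number), and $P_0(1)=0$. *)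

theory Defs
  imports "HOL-Analysis.Analysis"
begin

definition sphere_vol :: "nat \<Rightarrow> real" where
  "sphere_vol k = 2 * pi powr ((real k + 1) / 2) / Gamma ((real k + 1) / 2)"

text \<open>P_k(1) is the k-th harmonic number (library harm, with harm 0 = 0).\<close>
definition P1 :: "nat \<Rightarrow> real" where
  "P1 k = harm k"

definition K :: "nat \<Rightarrow> real" where
  "K n = (P1 (n-3) + (1 - 1 / 3 ^ (n-2)) * (P1 (n-2) + ln (3/4)))
          * 2 ^ (n-2) * sphere_vol (n-2) * sphere_vol (n-3) * Gamma (real n / 2) ^ 2
        / ((real n - 2) ^ 2 * sphere_vol (n-1) * Gamma (real n))"

end

theory Submission
  imports Defs
begin


lemma Gamma_step: "x > 0 \<Longrightarrow> Gamma (x + 1) = x * Gamma (x::real)"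
  by (rule Gamma_plus1) (auto elim!: nonpos_Ints_cases)

lemma sv_step: "sphere_vol (k+2) = sphere_vol k * 2 * pi / (real k + 1)"
proof -
  have g: "Gamma ((real k + 3)/2) = ((real k + 1)/2) * Gamma ((real k + 1)/2)"
  proof -
    have "(real k + 3)/2 = (real k + 1)/2 + 1" by simp
    then show ?thesis by (subst \<open>_ = _\<close>, intro Gamma_step) simp
  qed
  have p: "pi powr ((real k + 3)/2) = pi powr ((real k + 1)/2) * pi"
  proof -
    have "(real k + 3)/2 = (real k + 1)/2 + 1" by simp
    then show ?thesis by (simp only: powr_add) simp
  qed
  have "Gamma ((real k + 1)/2) > 0" by (intro Gamma_real_pos) simp
  moreover have sv: "sphere_vol (k+2) = 2 * pi powr ((real k + 3)/2) / Gamma ((real k + 3)/2)"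
    unfolding sphere_vol_def by (simp add: add.assoc add.commute)
  ultimately show ?thesis unfolding sv g p
    by (simp add: field_simps sphere_vol_def)
qed

lemma ln_lb: "s \<ge> 0 \<Longrightarrow> ln (1 + s) \<ge> 2 * s / (2 + (s::real))"
proof (cases "s = 0")
  case False
  assume "s \<ge> 0"
  then have "ln (1+s) - ln 1 \<ge> 2 * ((1+s) - 1) / (1 + (1+s))"
    using False by (intro ln_inverse_approx_ge) auto
  then show ?thesis by (simp add: add.commute)
qed simp



definition Lr :: "nat \<Rightarrow> real" where
 "Lr m = 2^(m+1) * sphere_vol (m+1) * sphere_vol m * Gamma ((real m + 3)/2)^2
     / ((real m + 1)^2 * sphere_vol (m+2) * Gamma (real m + 3))"

definition Rr :: "nat \<Rightarrow> real" where
 "Rr m = (2 * pi * exp 1 / (real m + 2)) powr ((real m + 2) / 2)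
     * (3 / (2 powr (3/2) * exp (5/2) * (real m + 1)))"

lemma sv_pos: "sphere_vol k > 0"
  unfolding sphere_vol_def by (intro divide_pos_pos Gamma_real_pos) auto

lemma alg_step:
  fixes P A B G H r pi :: real
  assumes "P > 0" "A > 0" "B > 0" "G > 0" "H > 0" "r \<ge> 0" "pi > 0"
  shows "4*P * (A*2*pi/(r+2)) * (B*2*pi/(r+1)) * ((r+3)/2*G)^2 /
     ((r+2+1)^2 * (B*2*pi/(r+1)*2*pi/(r+3)) * ((r+4)*(r+3)*H))
   = P*A*B*G^2/((r+1)^2*(B*2*pi/(r+1))*H) * (2*pi*(r+1)/((r+2)*(r+4)))"
proof -
  have "r+1 \<noteq> 0" "r+2 \<noteq> 0" "r+3 \<noteq> 0" "r+4 \<noteq> 0" "r+2+1 \<noteq> 0" using assms by auto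
  have "P \<noteq> 0" "A \<noteq> 0" "B \<noteq> 0" "G \<noteq> 0" "H \<noteq> 0" "pi \<noteq> 0" using assms by auto
  note nz = this \<open>r+1 \<noteq> 0\<close> \<open>r+2 \<noteq> 0\<close> \<open>r+3 \<noteq> 0\<close> \<open>r+4 \<noteq> 0\<close> \<open>r+2+1 \<noteq> 0\<close>
  have l: "4*P * (A*2*pi/(r+2)) * (B*2*pi/(r+1)) * ((r+3)/2*G)^2 /
     ((r+2+1)^2 * (B*2*pi/(r+1)*2*pi/(r+3)) * ((r+4)*(r+3)*H)) = P*A*G^2/((r+2)*(r+4)*H)"
    using nz by (simp add: divide_simps) (simp add: algebra_simps power2_eq_square)
  have r: "P*A*B*G^2/((r+1)^2*(B*2*pi/(r+1))*H) * (2*pi*(r+1)/((r+2)*(r+4))) = P*A*G^2/((r+2)*(r+4)*H)"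
    using nz by (simp add: divide_simps) (simp add: algebra_simps power2_eq_square)
  show ?thesis using l r by simp
qed

lemma Lr_step: "Lr (m+2) = Lr m * (2*pi*(real m+1)/((real m+2)*(real m+4)))"
proof -
  have s1: "sphere_vol (m+2+1) = sphere_vol (m+1)*2*pi/(real m+2)"
    using sv_step[of "m+1"] by (simp add: add.commute add.left_commute)
  have s2: "sphere_vol (m+2) = sphere_vol m*2*pi/(real m+1)"
    using sv_step[of m] by simp
  have s3: "sphere_vol (m+2+2) = sphere_vol m*2*pi/(real m+1)*2*pi/(real m+3)"
    using sv_step[of "m+2"] s2 by (simp add: add.commute add.left_commute)
  have g1: "Gamma ((real (m+2) + 3)/2) = ((real m + 3)/2) * Gamma ((real m + 3)/2)"
  proof -
    have e: "(real (m+2) + 3)/2 = (real m + 3)/2 + 1" by simp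
    show ?thesis by (subst e, intro Gamma_step) simp
  qed
  have g2: "Gamma (real (m+2) + 3) = (real m + 4) * (real m + 3) * Gamma (real m + 3)"
  proof -
    have e: "real (m+2) + 3 = (real m + 3 + 1) + 1" by simp
    have "Gamma (real (m+2) + 3) = (real m + 3 + 1) * Gamma (real m + 3 + 1)"
      by (subst e, intro Gamma_step) simp
    also have "Gamma (real m + 3 + 1) = (real m + 3) * Gamma (real m + 3)"
      by (intro Gamma_step) simp
    finally show ?thesis by (simp add: algebra_simps)
  qed
  have p: "(2::real)^(m+2+1) = 4 * 2^(m+1)" by simp
  have pos: "sphere_vol m > 0" "sphere_vol (m+1) > 0" "Gamma ((real m + 3)/2) > 0" "Gamma (real m + 3) > 0"
    using sv_pos by (auto intro!: Gamma_real_pos)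
  show ?thesis
    unfolding Lr_def[of "m+2"] s1 s3 g1 g2 p
    unfolding Lr_def s2 of_nat_add of_nat_numeral
    by (rule alg_step[OF _ pos(2,1,3,4) _ pi_gt_zero, of "2^(m+1)" "real m"]) simp_all
qed

lemma key_ineq:
  fixes y :: real assumes "y > 0"
  shows "exp 1 * y / (y+1) \<le> ((y+2)/y) powr (y/2)"
proof -
  have a: "ln (y+1) - ln y \<ge> 2 * ((y+1) - y) / (y + (y+1))"
    by (rule ln_inverse_approx_ge) (use assms in auto)
  have b: "ln (y+2) - ln y \<ge> 2 * ((y+2) - y) / (y + (y+2))"
    by (rule ln_inverse_approx_ge) (use assms in auto)
  have "ln (exp 1 * y / (y+1)) = 1 + ln y - ln (y+1)"
    using assms by (simp add: ln_mult ln_div)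
  also have "\<dots> \<le> 1 - 2/(2*y+1)" using a by simp
  also have "\<dots> \<le> (y/2) * (4/(2*y+2))"
    using assms by (simp add: field_simps)
  also have "\<dots> \<le> (y/2) * (ln (y+2) - ln y)"
    using b assms by (intro mult_left_mono) (auto simp: field_simps)
  also have "\<dots> = ln (((y+2)/y) powr (y/2))"
    using assms by (simp add: ln_powr ln_div)
  finally show ?thesis
    using assms by (subst (asm) ln_le_cancel_iff) auto
qed



lemma R_step_real:
  fixes y c :: real assumes y: "y \<ge> 2" and c: "c > 0"
  shows "(2*pi*exp 1/(y+2)) powr ((y+2)/2) * (3/(c*(y+1)))
       \<le> (2*pi*exp 1/y) powr (y/2) * (3/(c*(y-1))) * (2*pi*(y-1)/(y*(y+2)))"
proof -
  define Q where "Q = 2*pi*exp 1"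
  have Q: "Q > 0" unfolding Q_def by simp
  define W where "W = (Q/y) powr (y/2)"
  have W: "W > 0" unfolding W_def using Q y by simp
  have e1: "(Q/(y+2)) powr ((y+2)/2) = Q/(y+2) * (Q/(y+2)) powr (y/2)"
  proof -
    have eq: "(y+2)/2 = y/2 + 1" by simp
    show ?thesis unfolding eq powr_add using Q y by simp
  qed
  have e2: "(Q/(y+2)) powr (y/2) = W * (y/(y+2)) powr (y/2)"
  proof -
    have eq: "Q/(y+2) = (Q/y) * (y/(y+2))" using y by simp
    show ?thesis unfolding W_def eq using Q y by (intro powr_mult)
  qed
  have e3: "(y/(y+2)) powr (y/2) = 1 / ((y+2)/y) powr (y/2)"
    using y by (simp add: powr_divide)
  have k: "exp 1 * y / (y+1) \<le> ((y+2)/y) powr (y/2)"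
    using key_ineq[of y] y by simp
  have kpos: "exp 1 * y / (y+1) > 0" using y by simp
  have "(y/(y+2)) powr (y/2) \<le> 1 / (exp 1 * y / (y+1))"
    unfolding e3 using k kpos y by (intro divide_left_mono) auto
  also have "\<dots> = (y+1)/(exp 1 * y)" using y by simp
  finally have b: "(y/(y+2)) powr (y/2) \<le> (y+1)/(exp 1 * y)" .
  have "(Q/(y+2)) powr ((y+2)/2) * (3/(c*(y+1)))
      = Q/(y+2) * W * (3/(c*(y+1))) * (y/(y+2)) powr (y/2)"
    unfolding e1 e2 by simp
  also have "\<dots> \<le> Q/(y+2) * W * (3/(c*(y+1))) * ((y+1)/(exp 1 * y))"
    using b Q W y c by (intro mult_left_mono) auto
  also have "\<dots> = W * (3/(c*(y-1))) * (2*pi*(y-1)/(y*(y+2)))"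
  proof -
    have nz: "y \<noteq> 0" "y+1 \<noteq> 0" "y-1 \<noteq> 0" "y+2 \<noteq> 0" "c \<noteq> 0" "exp 1 \<noteq> 0" using y c by auto
    show ?thesis unfolding Q_def using nz by (simp add: divide_simps)
  qed
  finally show ?thesis unfolding Q_def W_def .
qed

lemma Rr_step: "Rr (m+2) \<le> Rr m * (2*pi*(real m+1)/((real m+2)*(real m+4)))"
proof -
  have c: "2 powr (3/2) * exp (5/2) > (0::real)" by simp
  have h: "(2*pi*exp 1/(real m+2+2)) powr ((real m+2+2)/2) * (3/(2 powr (3/2) * exp (5/2)*(real m+2+1)))
       \<le> (2*pi*exp 1/(real m+2)) powr ((real m+2)/2) * (3/(2 powr (3/2) * exp (5/2)*(real m+2-1))) * (2*pi*(real m+2-1)/((real m+2)*(real m+2+2)))"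
    by (rule R_step_real[OF _ c]) simp
  have eqs: "real m+2+2 = real (m+2) + 2" "real m+2+1 = real (m+2) + 1" "real m+2-1 = real m+1"
     "real m+2+2 = real m+4" by simp_all
  show ?thesis unfolding Rr_def using h unfolding eqs(3) by (simp only: eqs(1,2)) (simp only: eqs(4)[symmetric] eqs(1))
qed



lemma sv0: "sphere_vol 0 = 2"
  unfolding sphere_vol_def by (simp add: powr_half_sqrt Gamma_one_half_real)
lemma sv1: "sphere_vol 1 = 2*pi"
  unfolding sphere_vol_def by simp
lemma sv2: "sphere_vol 2 = 4*pi"
  using sv_step[of 0] sv0 by (simp add: eval_nat_numeral)
lemma sv3: "sphere_vol 3 = 2*pi^2"
  using sv_step[of 1] sv1 by (simp add: power2_eq_square eval_nat_numeral)

lemma svS: "sphere_vol (Suc 0) = 2*pi" "sphere_vol (Suc (Suc 0)) = 4*pi" "sphere_vol (Suc (Suc (Suc 0))) = 2*pi^2"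
  using sv1 sv2 sv3 by (simp_all add: eval_nat_numeral)

lemma G32: "Gamma (3/2::real) = sqrt pi / 2"
proof -
  have "Gamma (1/2 + 1 :: real) = 1/2 * Gamma (1/2)" by (rule Gamma_step) simp
  then show ?thesis by (simp add: Gamma_one_half_real)
qed

lemma Lr0: "Lr 0 = pi/4"
proof -
  have g3: "Gamma (3::real) = 2" using Gamma_fact[of 2, where 'a=real] by (simp add: fact_numeral)
  show ?thesis unfolding Lr_def by (simp add: sv0 svS G32 g3 power2_eq_square)
qed

lemma Lr1: "Lr 1 = 2/3"
proof -
  have g4: "Gamma (4::real) = 6" using Gamma_fact[of 3, where 'a=real] by (simp add: fact_numeral)
  have g2: "Gamma (2::real) = 1" using Gamma_fact[of 1, where 'a=real] by simp
  show ?thesis unfolding Lr_def by (simp add: svS g2 g4 power2_eq_square)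
qed

lemma e_ge: "exp 1 \<ge> (2718/1000::real)"
  using e_approx_32 by (simp add: abs_if split: if_splits)
lemma eh_ge: "exp (1/2) \<ge> (1625/1000::real)"
  using exp_lower_Taylor_quadratic[of "1/2::real"] by (simp add: power2_eq_square)
lemma s2_ge: "sqrt 2 \<ge> (1414/1000::real)"
  by (rule real_le_rsqrt) (simp add: power2_eq_square)
lemma p32: "2 powr (3/2) = 2 * sqrt (2::real)"
proof -
  have "2 powr (1 + 1/2) = 2 powr 1 * 2 powr (1/2::real)" by (rule powr_add)
  then show ?thesis by (simp add: powr_half_sqrt)
qed
lemma e52: "exp (5/2::real) = exp 1 * exp 1 * exp (1/2)"
proof -
  have "exp (5/2::real) = exp (1 + 1 + 1/2)" by simp
  also have "\<dots> = exp 1 * exp 1 * exp (1/2)" by (simp only: exp_add)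
  finally show ?thesis .
qed

lemma Rr0: "Rr 0 \<le> Lr 0"
proof -
  define D where "D = sqrt 2 * (exp 1 * exp (1/2::real))"
  have "(2718/1000) * (1625/1000) \<le> exp 1 * exp (1/2::real)"
    using e_ge eh_ge by (rule mult_mono) auto
  then have "(1414/1000) * ((2718/1000) * (1625/1000)) \<le> D"
    unfolding D_def using s2_ge by (rule_tac mult_mono) auto
  then have D6: "6 \<le> D" by simp
  have "Rr 0 = pi * exp 1 * 3 / (2 * sqrt 2 * (exp 1 * exp 1 * exp (1/2)))"
    unfolding Rr_def p32 e52 by simp
  also have "\<dots> = pi * 3 / (2 * D)" unfolding D_def by simp
  also have "\<dots> \<le> pi * 3 / (2 * 6)"
    using D6 pi_gt_zero by (intro divide_left_mono) auto
  finally show ?thesis using Lr0 by simp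
qed

lemma Rr1: "Rr 1 \<le> Lr 1"
proof -
  define q where "q = 2*pi*exp 1/3"
  have qpos: "q > 0" unfolding q_def by simp
  have pe: "pi * exp 1 \<le> 3.1416 * 2.72"
    using pi_approx(2) e_less_272 pi_gt_zero by (rule_tac mult_mono) auto
  have q_le: "q \<le> 57/10" unfolding q_def using pe by simp
  have sq: "sqrt q \<le> 239/100"
  proof -
    have "sqrt q \<le> sqrt ((239/100)^2)" using q_le by (simp add: power2_eq_square)
    then show ?thesis by simp
  qed
  have qq: "q * sqrt q \<le> 57/10 * (239/100)"
    using q_le sq qpos by (rule_tac mult_mono) auto
  have "Rr 1 = q powr (3/2) * (3 / (2 * sqrt 2 * (exp 1 * exp 1 * exp (1/2)) * 2))"
    unfolding Rr_def p32 e52 q_def by simp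
  also have "q powr (3/2) = q * sqrt q"
  proof -
    have "q powr (1 + 1/2) = q powr 1 * q powr (1/2::real)" by (rule powr_add)
    then show ?thesis using qpos by (simp add: powr_half_sqrt)
  qed
  also have "q * sqrt q * (3 / (2 * sqrt 2 * (exp 1 * exp 1 * exp (1/2)) * 2)) \<le> 2/3"
  proof -
    define D where "D = sqrt 2 * (exp 1 * exp 1 * exp (1/2::real))"
    have "(2718/1000) * (2718/1000) \<le> exp 1 * (exp 1::real)"
      using e_ge e_ge by (rule mult_mono) auto
    then have "(2718/1000) * (2718/1000) * (1625/1000) \<le> exp 1 * exp 1 * exp (1/2::real)"
      using eh_ge by (rule mult_mono) auto
    then have "(1414/1000) * ((2718/1000) * (2718/1000) * (1625/1000)) \<le> D"
      unfolding D_def using s2_ge by (rule_tac mult_mono) auto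
    then have "q * sqrt q * 9 \<le> 8 * D"
      using qq by simp
    moreover have "D > 0" unfolding D_def by simp
    ultimately have "q * sqrt q * (3 / (4 * D)) \<le> 2/3"
      by (simp add: field_simps)
    then show ?thesis unfolding D_def by (simp add: mult.assoc)
  qed
  finally show ?thesis using Lr1 by simp
qed



lemma LR: "Rr m \<le> Lr m"
proof (induction m rule: less_induct)
  case (less m)
  show ?case
  proof (cases "m \<le> 1")
    case True
    then have "m = 0 \<or> m = 1" by auto
    then show ?thesis using Rr0 Rr1 by auto
  next
    case False
    define k where "k = m - 2"
    have k: "m = k + 2" using False unfolding k_def by auto
    have f: "2*pi*(real k+1)/((real k+2)*(real k+4)) \<ge> 0" by simp
    have "Rr m \<le> Rr k * (2*pi*(real k+1)/((real k+2)*(real k+4)))" using Rr_step k by simp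
    also have "\<dots> \<le> Lr k * (2*pi*(real k+1)/((real k+2)*(real k+4)))"
      using less[of k] k f by (intro mult_right_mono) auto
    also have "\<dots> = Lr m" using Lr_step k by simp
    finally show ?thesis .
  qed
qed

lemma A_nonneg: "0 \<le> P1 m + (1 - 1 / 3 ^ (m+1)) * (P1 (m+1) + ln (3/4::real))"
proof -
  have h1: "harm (m+1) \<ge> (1::real)" using harm_mono[of 1 "m+1"] by (simp add: harm_def)
  have "ln (4/3::real) \<le> 4/3 - 1" by (rule ln_le_minus_one) simp
  moreover have "ln (3/4::real) = - ln (4/3)" by (simp add: ln_div)
  ultimately have h2: "ln (3/4::real) \<ge> -1/3" by simp
  have "(1::real) \<le> 3^(m+1)" by (rule one_le_power) simp
  then have h3: "(1 - 1 / 3 ^ (m+1) :: real) \<ge> 0" by simp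
  have h4: "0 \<le> harm (m+1) + ln(3/4::real)" using h1 h2 by linarith
  show ?thesis unfolding P1_def
    by (intro add_nonneg_nonneg mult_nonneg_nonneg harm_nonneg h3 h4)
qed

theorem lemma4p1:
  fixes n :: nat
  assumes "n \<ge> 3"
  shows "K n \<ge> (2 * pi * exp 1 / (real n - 1)) powr ((real n - 1) / 2)
     * (3 * (P1 (n-3) + (1 - 1 / 3 ^ (n-2)) * (P1 (n-2) + ln (3/4)))
        / (2 powr (3/2) * exp (5/2) * (real n - 2)))"
proof -
  obtain m where n: "n = m + 3" using assms by (metis add.commute le_add_diff_inverse)
  define A where "A = P1 m + (1 - 1 / 3 ^ (m+1)) * (P1 (m+1) + ln (3/4::real))"
  have A: "A \<ge> 0" unfolding A_def by (rule A_nonneg)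
  have e1: "n - 3 = m" "n - 2 = m + 1" "n - 1 = m + 2" "real n - 1 = real m + 2"
    "real n - 2 = real m + 1" "real n / 2 = (real m + 3)/2" "real n = real m + 3" using n by auto
  have K: "K n = A * Lr m"
    unfolding K_def Lr_def A_def e1 by (simp add: mult.assoc)
  have R: "(2 * pi * exp 1 / (real n - 1)) powr ((real n - 1) / 2)
     * (3 * (P1 (n-3) + (1 - 1 / 3 ^ (n-2)) * (P1 (n-2) + ln (3/4)))
        / (2 powr (3/2) * exp (5/2) * (real n - 2))) = A * Rr m"
    unfolding Rr_def A_def e1 by (simp add: algebra_simps)
  show ?thesis unfolding K R using A LR[of m] by (intro mult_left_mono) auto
qed

end
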